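(* Let $T$ be a finite set of students and $S$ a finite set of schools, school $s$ having capacity $q_s$. Each student $t$ submits an ordered list $\mathcal{L}_t=(s_t^1,\dots,s_t^{L_t})$ of distinct schools. For each school $s$, let $\mathcal{L}_s=\{t: s\in\mathcal{L}_t\}$ be its applicants; $s$ partitions $\mathcal{L}_s$ into acceptable and unacceptable applicants and strictly ranks the acceptable ones by a priority order $pr_s$. Let $\mu$ be the outcome of the student-proposing deferred acceptance algorithm run on these submitted lists and priorities (so each matched student $t$ has $\mu(t)\in\mathcal{L}_t$ and is acceptable to $\mu(t)$, and unacceptable applicants are never admitted). Suppose $\mu$ is non-wasteful: either $|\mu(s)|=q_s$ for every school $s$, or no student is unmatched. Then there exist a strict preference order $\succ_t$ over all of $S$ for each student $t$ and a strict priority order $\rhd_s$ over all of $T$ for each school $s$ such that (1) they are consistent with the submitted data: for each $t$, if $s,s'\in\mathcal{L}_t$ and $s$ appears before $s'$ in $\mathcal{L}_t$ then $s\succ_t s'$; for each $s$, if $t,t'$ are acceptable applicants of $s$ with $t$ ranked above $t'$ by $pr_s$ then $t\rhd_s t'$, and every acceptable applicant of $s$ is ranked by $\rhd_s$ above every unacceptable applicant of $s$; and (2) $\mu$ is stable under $(\succ,\rhd)$.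
   Context: A matching $\mu$ assigns each student $t$ either a school $\mu(t)\in S$ or leaves $t$ unmatched ($\mu(t)=t$), with $\mu(s)=\{t:\mu(t)=s\}$ and $|\mu(s)|\le q_s$. Under complete preferences, every student prefers any school to being unmatched. A matching $\mu$ is stable under $(\succ,\rhd)$ if there is no pair $(t,s)$ of a student and a school with either (i) $\mu(t)=t$ and $|\mu(s)|<q_s$, or (ii) $s\succ_t\mu(t)$ and $t\rhd_s t'$ for some $t'\in\mu(s)$. *)

theory Defs
  imports Main
begin

(* Submitted data:
   T :: 't set        finite set of students
   L :: 't => 's list  ordered (distinct) rank-order list of student t, first = most preferred
   q :: 's => nat      capacities
   pr :: 's => 't list  the acceptable applicants of s, listed by priority pr_s (first = highest);
                        applicants of s not in set (pr s) are unacceptable. *)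

definition applicants :: "'t set \<Rightarrow> ('t \<Rightarrow> 's list) \<Rightarrow> 's \<Rightarrow> 't set" where
  "applicants T L s = {t \<in> T. s \<in> set (L t)}"

(* State: idx t = number of rejections received by t,
   so t currently proposes to L t ! idx t (if idx t < length (L t)). *)
definition da_proposers :: "'t set \<Rightarrow> ('t \<Rightarrow> 's list) \<Rightarrow> ('t \<Rightarrow> nat) \<Rightarrow> 's \<Rightarrow> 't set" where
  "da_proposers T L idx s = {t \<in> T. idx t < length (L t) \<and> L t ! idx t = s}"

definition da_kept :: "'t set \<Rightarrow> ('t \<Rightarrow> 's list) \<Rightarrow> ('s \<Rightarrow> nat) \<Rightarrow> ('s \<Rightarrow> 't list)
    \<Rightarrow> ('t \<Rightarrow> nat) \<Rightarrow> 's \<Rightarrow> 't set" where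
  "da_kept T L q pr idx s = set (take (q s) (filter (\<lambda>t. t \<in> da_proposers T L idx s) (pr s)))"

definition da_step :: "'t set \<Rightarrow> ('t \<Rightarrow> 's list) \<Rightarrow> ('s \<Rightarrow> nat) \<Rightarrow> ('s \<Rightarrow> 't list)
    \<Rightarrow> ('t \<Rightarrow> nat) \<Rightarrow> ('t \<Rightarrow> nat)" where
  "da_step T L q pr idx = (\<lambda>t. if t \<in> T \<and> idx t < length (L t)
        \<and> t \<notin> da_kept T L q pr idx (L t ! idx t) then Suc (idx t) else idx t)"

(* Each non-terminal round increases the total number of rejections, which is bounded by the
   sum of list lengths; hence after that many rounds the algorithm has terminated. *)
definition da_idx :: "'t set \<Rightarrow> ('t \<Rightarrow> 's list) \<Rightarrow> ('s \<Rightarrow> nat) \<Rightarrow> ('s \<Rightarrow> 't list) \<Rightarrow> 't \<Rightarrow> nat" where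
  "da_idx T L q pr = (da_step T L q pr ^^ (\<Sum>t\<in>T. length (L t))) (\<lambda>_. 0)"

definition DA :: "'t set \<Rightarrow> ('t \<Rightarrow> 's list) \<Rightarrow> ('s \<Rightarrow> nat) \<Rightarrow> ('s \<Rightarrow> 't list) \<Rightarrow> 't \<Rightarrow> 's option" where
  "DA T L q pr t = (let i = da_idx T L q pr t in
      if t \<in> T \<and> i < length (L t) then Some (L t ! i) else None)"

definition assigned :: "'t set \<Rightarrow> ('t \<Rightarrow> 's option) \<Rightarrow> 's \<Rightarrow> 't set" where
  "assigned T mu s = {t \<in> T. mu t = Some s}"

(* s \<succ>_t mu(t), with complete preferences (any school beats being unmatched);
   (a,b) \<in> pref t means a \<succ>_t b *)
definition prefers_to_match :: "('t \<Rightarrow> ('s \<times> 's) set) \<Rightarrow> ('t \<Rightarrow> 's option) \<Rightarrow> 't \<Rightarrow> 's \<Rightarrow> bool" where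
  "prefers_to_match pref mu t s = (case mu t of None \<Rightarrow> True | Some s0 \<Rightarrow> (s, s0) \<in> pref t)"

(* (t,t') \<in> prio s means t \<rhd>_s t' *)
definition stable :: "'t set \<Rightarrow> 's set \<Rightarrow> ('s \<Rightarrow> nat) \<Rightarrow> ('t \<Rightarrow> ('s \<times> 's) set)
    \<Rightarrow> ('s \<Rightarrow> ('t \<times> 't) set) \<Rightarrow> ('t \<Rightarrow> 's option) \<Rightarrow> bool" where
  "stable T S q pref prio mu \<longleftrightarrow>
     (\<forall>t\<in>T. \<forall>s\<in>S. \<not> (mu t = None \<and> card (assigned T mu s) < q s)
        \<and> \<not> (prefers_to_match pref mu t s \<and> (\<exists>t'\<in>assigned T mu s. (t, t') \<in> prio s)))"

end

theory Submission
  imports Defs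
begin

definition pos :: "'a list \<Rightarrow> 'a \<Rightarrow> nat" where
  "pos xs x = length (takeWhile (\<lambda>y. y \<noteq> x) xs)"

lemma pos_nth: "distinct xs \<Longrightarrow> i < length xs \<Longrightarrow> pos xs (xs ! i) = i"
proof (induction xs arbitrary: i)
  case Nil then show ?case by simp
next
  case (Cons a xs)
  show ?case
  proof (cases i)
    case 0 then show ?thesis by (simp add: pos_def)
  next
    case (Suc k)
    have kl: "k < length xs" using Cons.prems Suc by simp
    have dx: "distinct xs" and an: "a \<notin> set xs" using Cons.prems by auto
    have "xs ! k \<in> set xs" using kl by (rule nth_mem)
    then have ne: "xs ! k \<noteq> a" using an by blast
    have "pos (a # xs) ((a # xs) ! i) = pos (a # xs) (xs ! k)" using Suc by simp
    also have "\<dots> = Suc (pos xs (xs ! k))" using ne by (simp add: pos_def)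
    also have "pos xs (xs ! k) = k" using Cons.IH[OF dx kl] .
    finally show ?thesis using Suc by simp
  qed
qed

lemma pos_less: "x \<in> set xs \<Longrightarrow> pos xs x < length xs"
  unfolding pos_def by (induction xs) auto

lemma pos_notin: "x \<notin> set xs \<Longrightarrow> pos xs x = length xs"
  unfolding pos_def by (induction xs) auto

lemma nth_pos: "x \<in> set xs \<Longrightarrow> xs ! pos xs x = x"
proof -
  assume "x \<in> set xs"
  then have l: "length (takeWhile (\<lambda>y. y \<noteq> x) xs) < length xs" using pos_less[of x xs] unfolding pos_def by blast
  show ?thesis using nth_length_takeWhile[OF l] unfolding pos_def by blast
qed

lemma pos_tw: "x \<in> set (takeWhile (\<lambda>y. y \<noteq> t) xs) \<Longrightarrow> t \<in> set xs \<Longrightarrow> pos xs x < pos xs t"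
  by (induction xs) (auto simp: pos_def split: if_splits)

lemma take_tw: "q \<le> length (filter P (takeWhile (\<lambda>y. y \<noteq> t) xs)) \<Longrightarrow>
   take q (filter P xs) = take q (filter P (takeWhile (\<lambda>y. y \<noteq> t) xs))"
proof -
  assume a: "q \<le> length (filter P (takeWhile (\<lambda>y. y \<noteq> t) xs))"
  have "filter P xs = filter P (takeWhile (\<lambda>y. y \<noteq> t) xs) @ filter P (dropWhile (\<lambda>y. y \<noteq> t) xs)"
    by (metis filter_append takeWhile_dropWhile_id)
  then show ?thesis using a by simp
qed

lemma reject_tw: "t \<in> set xs \<Longrightarrow> P t \<Longrightarrow> t \<notin> set (take q (filter P xs)) \<Longrightarrow>
   q \<le> length (filter P (takeWhile (\<lambda>y. y \<noteq> t) xs))"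
proof (induction xs arbitrary: q)
  case Nil then show ?case by simp
next
  case (Cons a xs)
  show ?case
  proof (cases "a = t")
    case True
    then show ?thesis using Cons.prems by (cases q) auto
  next
    case False
    then have t: "t \<in> set xs" using Cons.prems by simp
    show ?thesis
    proof (cases "P a")
      case True
      show ?thesis
      proof (cases q)
        case 0 then show ?thesis by simp
      next
        case (Suc k)
        then have "t \<notin> set (take k (filter P xs))" using Cons.prems True False by simp
        then have "k \<le> length (filter P (takeWhile (\<lambda>y. y \<noteq> t) xs))" using Cons.IH t Cons.prems by blast
        then show ?thesis using Suc True False by simp
      qed
    next
      case F: False
      then show ?thesis using Cons False t by simp
    qed
  qed
qed

lemma card_filter_ge: "distinct zs \<Longrightarrow> length zs = q \<Longrightarrow> set zs \<subseteq> set ys \<inter> {x. P x} \<Longrightarrow> distinct ys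
   \<Longrightarrow> q \<le> length (filter P ys)"
proof -
  assume a: "distinct zs" "length zs = q" "set zs \<subseteq> set ys \<inter> {x. P x}" "distinct ys"
  have "card (set zs) = q" using a distinct_card by metis
  moreover have "set zs \<subseteq> set (filter P ys)" using a by auto
  then have "card (set zs) \<le> card (set (filter P ys))" by (simp add: card_mono)
  moreover have "card (set (filter P ys)) = length (filter P ys)" using a distinct_card distinct_filter by metis
  ultimately show ?thesis by simp
qed

definition lexrel :: "'a set \<Rightarrow> ('a \<Rightarrow> nat) \<Rightarrow> ('a \<Rightarrow> nat) \<Rightarrow> ('a \<times> 'a) set" where
  "lexrel A f g = {(a, b). a \<in> A \<and> b \<in> A \<and> (f a < f b \<or> f a = f b \<and> g a < g b)}"

lemma lexrel_slo: "inj_on g A \<Longrightarrow> strict_linear_order_on A (lexrel A f g)"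
proof -
  assume inj: "inj_on g A"
  have "trans (lexrel A f g)" unfolding trans_def lexrel_def by auto
  moreover have "irrefl (lexrel A f g)" unfolding irrefl_def lexrel_def by auto
  moreover have "total_on A (lexrel A f g)" unfolding total_on_def lexrel_def
  proof (intro ballI impI)
    fix x y assume "x \<in> A" "y \<in> A" "x \<noteq> y"
    then have "g x \<noteq> g y" using inj by (auto simp: inj_on_def)
    then show "(x, y) \<in> {(a, b). a \<in> A \<and> b \<in> A \<and> (f a < f b \<or> f a = f b \<and> g a < g b)} \<or>
          (y, x) \<in> {(a, b). a \<in> A \<and> b \<in> A \<and> (f a < f b \<or> f a = f b \<and> g a < g b)}"
      using \<open>x \<in> A\<close> \<open>y \<in> A\<close> by auto
  qed
  ultimately show ?thesis unfolding strict_linear_order_on_def by blast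
qed

lemma kept_sub: "x \<in> da_kept T L q pr idx s \<Longrightarrow> x \<in> da_proposers T L (da_step T L q pr idx) s"
proof -
  assume "x \<in> da_kept T L q pr idx s"
  moreover then have p: "x \<in> T \<and> idx x < length (L x) \<and> L x ! idx x = s"
    unfolding da_kept_def da_proposers_def by (auto dest: in_set_takeD)
  ultimately have "da_step T L q pr idx x = idx x" unfolding da_step_def by auto
  then show ?thesis using p unfolding da_proposers_def by auto
qed

lemma kept_prop: "x \<in> da_kept T L q pr idx s \<Longrightarrow> x \<in> da_proposers T L idx s \<and> x \<in> set (pr s)"
  unfolding da_kept_def by (auto dest: in_set_takeD)

lemma propag:
  assumes d: "distinct (pr s)"
    and a: "q s \<le> length (filter (\<lambda>x. x \<in> da_proposers T L idx s) (takeWhile (\<lambda>y. y \<noteq> t) (pr s)))"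
  shows "q s \<le> length (filter (\<lambda>x. x \<in> da_proposers T L (da_step T L q pr idx) s) (takeWhile (\<lambda>y. y \<noteq> t) (pr s)))"
proof -
  let ?zs = "take (q s) (filter (\<lambda>x. x \<in> da_proposers T L idx s) (takeWhile (\<lambda>y. y \<noteq> t) (pr s)))"
  have k: "da_kept T L q pr idx s = set ?zs"
    unfolding da_kept_def using take_tw[OF a] by simp
  have z1: "distinct ?zs" using d by simp
  have z2: "length ?zs = q s" using a by simp
  have z3: "set ?zs \<subseteq> set (takeWhile (\<lambda>y. y \<noteq> t) (pr s)) \<inter> {x. x \<in> da_proposers T L (da_step T L q pr idx) s}"
    using kept_sub[of _ T L q pr idx s] k by (auto dest: in_set_takeD)
  show ?thesis by (rule card_filter_ge[OF z1 z2 z3]) (simp add: d)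
qed

definition inv where
  "inv T L q pr idx \<longleftrightarrow> (\<forall>t\<in>T. idx t \<le> length (L t)) \<and>
    (\<forall>t\<in>T. \<forall>j<idx t. t \<in> set (pr (L t ! j)) \<longrightarrow>
       q (L t ! j) \<le> length (filter (\<lambda>x. x \<in> da_proposers T L idx (L t ! j)) (takeWhile (\<lambda>y. y \<noteq> t) (pr (L t ! j)))))"

lemma inv_step:
  assumes dL: "\<And>t. t \<in> T \<Longrightarrow> set (L t) \<subseteq> S"
    and dp: "\<And>s. s \<in> S \<Longrightarrow> distinct (pr s)"
    and I: "inv T L q pr idx"
  shows "inv T L q pr (da_step T L q pr idx)"
  unfolding inv_def
proof (intro conjI ballI allI impI)
  fix t assume "t \<in> T"
  then have "idx t \<le> length (L t)" using I unfolding inv_def by blast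
  then show "da_step T L q pr idx t \<le> length (L t)" unfolding da_step_def by simp
next
  fix t j assume t: "t \<in> T" and j: "j < da_step T L q pr idx t" and m: "t \<in> set (pr (L t ! j))"
  let ?s = "L t ! j"
  have "idx t \<le> length (L t)" using I t unfolding inv_def by blast
  then have "da_step T L q pr idx t \<le> length (L t)" unfolding da_step_def by simp
  then have jl: "j < length (L t)" using j by simp
  then have "?s \<in> S" using dL t by (meson nth_mem subsetD)
  then have d: "distinct (pr ?s)" using dp by blast
  show "q ?s \<le> length (filter (\<lambda>x. x \<in> da_proposers T L (da_step T L q pr idx) ?s) (takeWhile (\<lambda>y. y \<noteq> t) (pr ?s)))"
  proof (cases "j < idx t")
    case True
    have I2: "\<forall>t\<in>T. \<forall>j<idx t. t \<in> set (pr (L t ! j)) \<longrightarrow>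
       q (L t ! j) \<le> length (filter (\<lambda>x. x \<in> da_proposers T L idx (L t ! j)) (takeWhile (\<lambda>y. y \<noteq> t) (pr (L t ! j))))"
      using I unfolding inv_def by (rule conjunct2)
    have "q ?s \<le> length (filter (\<lambda>x. x \<in> da_proposers T L idx ?s) (takeWhile (\<lambda>y. y \<noteq> t) (pr ?s)))"
      using I2 t True m by blast
    then show ?thesis using propag[where pr=pr and s="L t ! j", OF d] by blast
  next
    case False
    have st: "da_step T L q pr idx t \<noteq> idx t" using j False by auto
    have c0: "idx t < length (L t) \<and> t \<notin> da_kept T L q pr idx (L t ! idx t)"
    proof (rule ccontr)
      assume "\<not> ?thesis"
      then have "da_step T L q pr idx t = idx t" unfolding da_step_def by auto
      then show False using st by simp
    qed
    then have "da_step T L q pr idx t = Suc (idx t)" using t unfolding da_step_def by simp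
    then have c: "j < Suc (idx t) \<and> idx t < length (L t) \<and> t \<notin> da_kept T L q pr idx (L t ! idx t)"
      using j c0 by simp
    then have e: "j = idx t" using False by simp
    then have rej: "t \<notin> da_kept T L q pr idx ?s" and il: "idx t < length (L t)" using c by auto
    have "t \<in> da_proposers T L idx ?s" using e il t unfolding da_proposers_def by auto
    then have "q ?s \<le> length (filter (\<lambda>x. x \<in> da_proposers T L idx ?s) (takeWhile (\<lambda>y. y \<noteq> t) (pr ?s)))"
      using reject_tw[OF m, of "\<lambda>x. x \<in> da_proposers T L idx ?s" "q ?s"] rej unfolding da_kept_def by blast
    then show ?thesis using propag[where pr=pr and s="L t ! j", OF d] by blast
  qed
qed

lemma inv_iter:
  assumes "\<And>t. t \<in> T \<Longrightarrow> set (L t) \<subseteq> S" and "\<And>s. s \<in> S \<Longrightarrow> distinct (pr s)"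
  shows "inv T L q pr ((da_step T L q pr ^^ n) (\<lambda>_. 0))"
proof (induction n)
  case 0 then show ?case unfolding inv_def by simp
next
  case (Suc n) then show ?case using inv_step[OF assms] by simp
qed

lemma step_mono: "idx t \<le> da_step T L q pr idx t"
  unfolding da_step_def by auto

lemma step_changed: "da_step T L q pr idx t \<noteq> idx t \<Longrightarrow> t \<in> T \<and> idx t < length (L t) \<and> da_step T L q pr idx t = Suc (idx t)"
  unfolding da_step_def by (auto split: if_splits)

lemma fix_or_big:
  assumes "finite T"
  shows "da_step T L q pr ((da_step T L q pr ^^ n) (\<lambda>_. 0)) = (da_step T L q pr ^^ n) (\<lambda>_. 0)
     \<or> n \<le> (\<Sum>t\<in>T. (da_step T L q pr ^^ n) (\<lambda>_. 0) t)"
proof (induction n)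
  case 0 show ?case by (rule disjI2) simp
next
  case (Suc n)
  let ?F = "da_step T L q pr"
  let ?x = "(?F ^^ n) (\<lambda>_. 0)"
  have eq: "(?F ^^ Suc n) (\<lambda>_. 0) = ?F ?x" by (rule funpow.simps(2)[THEN fun_cong, unfolded comp_apply])
  show ?case
  proof (cases "?F ?x = ?x")
    case True
    show ?thesis unfolding eq True by (rule disjI1) (rule refl)
  next
    case False
    then obtain t where ne: "?F ?x t \<noteq> ?x t" by (auto simp only: fun_eq_iff)
    then have tT: "t \<in> T" using step_changed[where T=T and L=L and q=q and pr=pr and idx="?x" and t=t] by simp
    have lt: "(\<Sum>t\<in>T. ?x t) < (\<Sum>t\<in>T. ?F ?x t)"
    proof (rule sum_strict_mono_ex1[OF assms])
      show "\<forall>i\<in>T. ?x i \<le> ?F ?x i" by (simp add: step_mono)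
      have "?x t \<le> ?F ?x t" by (rule step_mono)
      then have "?x t < ?F ?x t" using ne by linarith
      then show "\<exists>i\<in>T. ?x i < ?F ?x i" using tT by blast
    qed
    have "n \<le> (\<Sum>t\<in>T. ?x t)" using Suc.IH False by blast
    then have "Suc n \<le> (\<Sum>t\<in>T. ?F ?x t)" using lt by linarith
    then show ?thesis unfolding eq by (rule disjI2)
  qed
qed

lemma final_fix:
  assumes "finite T" "\<And>t. t \<in> T \<Longrightarrow> set (L t) \<subseteq> S" "\<And>s. s \<in> S \<Longrightarrow> distinct (pr s)"
  shows "da_step T L q pr (da_idx T L q pr) = da_idx T L q pr"
proof (rule ccontr)
  let ?F = "da_step T L q pr"
  let ?x = "da_idx T L q pr"
  let ?N = "\<Sum>t\<in>T. length (L t)"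
  assume nf: "?F ?x \<noteq> ?x"
  have I: "inv T L q pr ?x" unfolding da_idx_def by (rule inv_iter[OF assms(2,3)])
  have d0: "?F ((?F ^^ ?N) (\<lambda>_. 0)) = (?F ^^ ?N) (\<lambda>_. 0) \<or> ?N \<le> (\<Sum>t\<in>T. (?F ^^ ?N) (\<lambda>_. 0) t)"
    by (rule fix_or_big[OF assms(1)])
  have d: "?F ?x = ?x \<or> ?N \<le> (\<Sum>t\<in>T. ?x t)" unfolding da_idx_def by (rule d0)
  have big: "?N \<le> (\<Sum>t\<in>T. ?x t)" using d nf by blast
  from nf obtain t where ne: "?F ?x t \<noteq> ?x t" by (auto simp only: fun_eq_iff)
  then have tT: "t \<in> T" and lt: "?x t < length (L t)"
    using step_changed[where T=T and L=L and q=q and pr=pr and idx="?x" and t=t] by simp_all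
  have I1: "\<forall>t\<in>T. ?x t \<le> length (L t)" using I unfolding inv_def by (rule conjunct1)
  have "(\<Sum>t\<in>T. ?x t) < ?N"
  proof (rule sum_strict_mono_ex1[OF assms(1)])
    show "\<forall>i\<in>T. ?x i \<le> length (L i)" by (rule I1)
    show "\<exists>i\<in>T. ?x i < length (L i)" using tT lt by blast
  qed
  then show False using big by simp
qed

theorem mainTheorem2:
  fixes T :: "'t set" and S :: "'s set"
    and q :: "'s \<Rightarrow> nat"
    and L :: "'t \<Rightarrow> 's list"
    and pr :: "'s \<Rightarrow> 't list"
  assumes "finite T" and "finite S"
    and "\<And>t. t \<in> T \<Longrightarrow> distinct (L t) \<and> set (L t) \<subseteq> S"
    and "\<And>s. s \<in> S \<Longrightarrow> distinct (pr s) \<and> set (pr s) \<subseteq> applicants T L s"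
    and "(\<forall>s\<in>S. card (assigned T (DA T L q pr) s) = q s) \<or> (\<forall>t\<in>T. DA T L q pr t \<noteq> None)"
  shows "\<exists>pref :: 't \<Rightarrow> ('s \<times> 's) set. \<exists>prio :: 's \<Rightarrow> ('t \<times> 't) set.
      (\<forall>t\<in>T. pref t \<subseteq> S \<times> S \<and> strict_linear_order_on S (pref t)) \<and>
      (\<forall>s\<in>S. prio s \<subseteq> T \<times> T \<and> strict_linear_order_on T (prio s)) \<and>
      (\<forall>t\<in>T. \<forall>i j. i < j \<and> j < length (L t) \<longrightarrow> (L t ! i, L t ! j) \<in> pref t) \<and>
      (\<forall>s\<in>S. \<forall>i j. i < j \<and> j < length (pr s) \<longrightarrow> (pr s ! i, pr s ! j) \<in> prio s) \<and>
      (\<forall>s\<in>S. \<forall>t\<in>set (pr s). \<forall>t'\<in>applicants T L s - set (pr s). (t, t') \<in> prio s) \<and>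
      stable T S q pref prio (DA T L q pr)"
  proof -
  have dL: "\<And>t. t \<in> T \<Longrightarrow> set (L t) \<subseteq> S" using assms(3) by blast
  have dLt: "\<And>t. t \<in> T \<Longrightarrow> distinct (L t)" using assms(3) by blast
  have dp: "\<And>s. s \<in> S \<Longrightarrow> distinct (pr s)" using assms(4) by blast
  have prA: "\<And>s. s \<in> S \<Longrightarrow> set (pr s) \<subseteq> applicants T L s" using assms(4) by blast
  obtain g :: "'t \<Rightarrow> nat" where g: "inj_on g T" using finite_imp_inj_to_nat_seg[OF assms(1)] by blast
  obtain h :: "'s \<Rightarrow> nat" where h: "inj_on h S" using finite_imp_inj_to_nat_seg[OF assms(2)] by blast
  define pref where "pref = (\<lambda>t. lexrel S (pos (L t)) h)"
  define rk where "rk = (\<lambda>s t. if t \<in> set (pr s) then pos (pr s) t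
      else if t \<in> applicants T L s then length (pr s) else Suc (length (pr s)))"
  define prio where "prio = (\<lambda>s. lexrel T (rk s) g)"
  define idx where "idx = da_idx T L q pr"
  define mu where "mu = DA T L q pr"
  have fx: "da_step T L q pr idx = idx" unfolding idx_def by (rule final_fix[OF assms(1) dL dp])
  have I: "inv T L q pr idx" unfolding idx_def da_idx_def by (rule inv_iter[OF dL dp])
  have I1: "\<forall>t\<in>T. idx t \<le> length (L t)" using I unfolding inv_def by (rule conjunct1)
  have I2: "\<forall>t\<in>T. \<forall>j<idx t. t \<in> set (pr (L t ! j)) \<longrightarrow>
       q (L t ! j) \<le> length (filter (\<lambda>x. x \<in> da_proposers T L idx (L t ! j)) (takeWhile (\<lambda>y. y \<noteq> t) (pr (L t ! j))))"
    using I unfolding inv_def by (rule conjunct2)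
  have mu_eq: "\<And>t s. mu t = Some s \<longleftrightarrow> t \<in> T \<and> idx t < length (L t) \<and> L t ! idx t = s"
    unfolding mu_def DA_def idx_def Let_def by auto
  have mu_None: "\<And>t. mu t = None \<longleftrightarrow> \<not> (t \<in> T \<and> idx t < length (L t))"
    unfolding mu_def DA_def idx_def Let_def by auto
  have asg: "\<And>s. assigned T mu s = da_proposers T L idx s"
    unfolding assigned_def da_proposers_def using mu_eq by auto
  have kept: "\<And>x s. x \<in> da_proposers T L idx s \<Longrightarrow> x \<in> da_kept T L q pr idx s"
  proof -
    fix x s assume p: "x \<in> da_proposers T L idx s"
    then have p': "x \<in> T \<and> idx x < length (L x) \<and> L x ! idx x = s" unfolding da_proposers_def by blast
    have "da_step T L q pr idx x = idx x" using fx by simp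
    then show "x \<in> da_kept T L q pr idx s" using p' unfolding da_step_def by (auto split: if_splits)
  qed
  have P1: "\<forall>t\<in>T. pref t \<subseteq> S \<times> S \<and> strict_linear_order_on S (pref t)"
    unfolding pref_def using lexrel_slo[OF h] by (auto simp: lexrel_def)
  have P2: "\<forall>s\<in>S. prio s \<subseteq> T \<times> T \<and> strict_linear_order_on T (prio s)"
    unfolding prio_def using lexrel_slo[OF g] by (auto simp: lexrel_def)
  have P3: "\<forall>t\<in>T. \<forall>i j. i < j \<and> j < length (L t) \<longrightarrow> (L t ! i, L t ! j) \<in> pref t"
  proof (intro ballI allI impI)
    fix t i j assume t: "t \<in> T" and ij: "i < j \<and> j < length (L t)"
    have "pos (L t) (L t ! i) = i" "pos (L t) (L t ! j) = j" using pos_nth[OF dLt[OF t]] ij by auto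
    moreover have "L t ! i \<in> S" "L t ! j \<in> S" using dL[OF t] ij by auto
    ultimately show "(L t ! i, L t ! j) \<in> pref t" unfolding pref_def lexrel_def using ij by auto
  qed
  have P4: "\<forall>s\<in>S. \<forall>i j. i < j \<and> j < length (pr s) \<longrightarrow> (pr s ! i, pr s ! j) \<in> prio s"
  proof (intro ballI allI impI)
    fix s i j assume s: "s \<in> S" and ij: "i < j \<and> j < length (pr s)"
    have "pos (pr s) (pr s ! i) = i" "pos (pr s) (pr s ! j) = j" using pos_nth[OF dp[OF s]] ij by auto
    moreover have "pr s ! i \<in> set (pr s)" "pr s ! j \<in> set (pr s)" using ij by auto
    moreover then have "pr s ! i \<in> T" "pr s ! j \<in> T" using prA[OF s] unfolding applicants_def by auto
    ultimately show "(pr s ! i, pr s ! j) \<in> prio s" unfolding prio_def lexrel_def rk_def using ij by auto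
  qed
  have P5: "\<forall>s\<in>S. \<forall>t\<in>set (pr s). \<forall>t'\<in>applicants T L s - set (pr s). (t, t') \<in> prio s"
  proof (intro ballI)
    fix s t t' assume s: "s \<in> S" and t: "t \<in> set (pr s)" and t': "t' \<in> applicants T L s - set (pr s)"
    have "t \<in> T" using t prA[OF s] unfolding applicants_def by auto
    moreover have "t' \<in> T" using t' unfolding applicants_def by auto
    moreover have "rk s t < rk s t'" using t t' pos_less[OF t] unfolding rk_def by auto
    ultimately show "(t, t') \<in> prio s" unfolding prio_def lexrel_def by auto
  qed
  have P6: "stable T S q pref prio mu"
    unfolding stable_def
  proof (intro ballI conjI notI)
    fix t s assume t: "t \<in> T" and s: "s \<in> S"
    {
      assume a: "mu t = None \<and> card (assigned T mu s) < q s"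
      show False using assms(5) a t s unfolding mu_def by auto
    }
    {
      assume a: "prefers_to_match pref mu t s \<and> (\<exists>t'\<in>assigned T mu s. (t, t') \<in> prio s)"
      then obtain t' where t'A: "t' \<in> assigned T mu s" and tp: "(t, t') \<in> prio s" by blast
      have t'K: "t' \<in> da_kept T L q pr idx s" using kept t'A asg by blast
      then have t'p: "t' \<in> set (pr s)" using kept_prop[OF t'K] by blast
      have rk': "rk s t' = pos (pr s) t'" unfolding rk_def using t'p by simp
      have tp': "rk s t < rk s t' \<or> rk s t = rk s t' \<and> g t < g t'" using tp unfolding prio_def lexrel_def by auto
      have tpr: "t \<in> set (pr s)"
      proof (rule ccontr)
        assume "t \<notin> set (pr s)"
        then have "length (pr s) \<le> rk s t" unfolding rk_def by auto
        then show False using tp' rk' pos_less[OF t'p] by auto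
      qed
      have rkt: "rk s t = pos (pr s) t" unfolding rk_def using tpr by simp
      have lt: "pos (pr s) t < pos (pr s) t'"
      proof -
        { assume e: "pos (pr s) t = pos (pr s) t'"
          then have "t = t'" using nth_pos[OF tpr] nth_pos[OF t'p] by metis
          then have False using tp' by auto }
        then show ?thesis using tp' rk' rkt by fastforce
      qed
      have sL: "s \<in> set (L t)" using tpr prA[OF s] unfolding applicants_def by auto
      obtain j where j: "j < idx t" "L t ! j = s"
      proof (cases "mu t")
        case None
        then have "idx t = length (L t)" using mu_None t I1 by force
        then show ?thesis using that sL by (metis in_set_conv_nth)
      next
        case (Some s0)
        then have il: "idx t < length (L t)" and s0: "L t ! idx t = s0" using mu_eq by auto
        have ps0: "pos (L t) s0 = idx t" using pos_nth[OF dLt[OF t] il] s0 by simp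
        have sp: "(s, s0) \<in> pref t" using a Some unfolding prefers_to_match_def by simp
        then have sp': "pos (L t) s < pos (L t) s0 \<or> pos (L t) s = pos (L t) s0 \<and> h s < h s0"
          unfolding pref_def lexrel_def by auto
        have s0L: "s0 \<in> set (L t)" using il s0 by auto
        have "pos (L t) s < idx t"
        proof -
          { assume e: "pos (L t) s = pos (L t) s0"
            then have "s = s0" using nth_pos[OF sL] nth_pos[OF s0L] by metis
            then have False using sp' by auto }
          then show ?thesis using sp' ps0 by fastforce
        qed
        then show ?thesis using that nth_pos[OF sL] by blast
      qed
      have "q s \<le> length (filter (\<lambda>x. x \<in> da_proposers T L idx s) (takeWhile (\<lambda>y. y \<noteq> t) (pr s)))"
        using I2 t j tpr by blast
      from take_tw[OF this] have "da_kept T L q pr idx s \<subseteq> set (takeWhile (\<lambda>y. y \<noteq> t) (pr s))"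
        unfolding da_kept_def by (auto dest: in_set_takeD)
      then have "t' \<in> set (takeWhile (\<lambda>y. y \<noteq> t) (pr s))" using t'K by blast
      then have "pos (pr s) t' < pos (pr s) t" by (rule pos_tw[OF _ tpr])
      then show False using lt by simp
    }
  qed
  show ?thesis
    apply (rule exI[of _ pref], rule exI[of _ prio])
    using P1 P2 P3 P4 P5 P6 unfolding mu_def by blast
qed

end
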